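(* The sub-set-operad of $\mathrm{RWS}$ generated by $A_\prec$ and $A_\succ$ consists exactly of the recursively labelled red and white trees in which every node has exactly one label (no empty nodes and no node with two or more labels).
   Context: Red and white trees: $\mathrm{RW}(n)$ is the set of finite rooted trees (children unordered) whose nodes $z$ carry possibly empty label sets $L(z)\subseteq[n]$ partitioning $[n]$, each empty node having at least two children; labelled nodes are white, an empty node is red iff all its children are white. Composition $T_1\circ_xT_2$ ($T_1\in\mathrm{RW}(m)$, $T_2\in\mathrm{RW}(n)$): relabel $T_1$ by $y\mapsto y+n-1$ for $y>x$ and $T_2$ by $y\mapsto y+x-1$; $z\ni x$ in $T_1$, $r$ = root of $T_2$. (W) $r$ not red: remove $x$ from $L(z)$, add $L(r)$ to $L(z)$, children of $r$ become children of $z$. (R1) $r$ red, $T_1$ the single node $\{x\}$: result $T_2$. (R2) $r$ red and ($z$ has a child or $|L(z)|\ge2$): remove $x$ from $L(z)$, attach $T_2$ as child subtree of $z$. (R3) $r$ red, $z$ non-root leaf with $L(z)=\{x\}$: delete $z$, children of $r$ become children of the parent of $z$. Colours recomputed. A tree is recursively labelled if for each node the union of label sets in its subtree is an interval of integers. $\mathrm{RWS}$ is the sub-set-operad generated by $A_\mu$ (single node $\{1,2\}$), $A_\prec$ (root $\{1\}$ with child $\{2\}$), $A_\succ$ (root $\{2\}$ with child $\{1\}$), $A_\odot$ (empty red root with children $\{1\},\{2\}$). *)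

theory Defs
  imports "HOL-Library.Multiset"
begin

datatype rt = Node "nat set" "rt multiset"

primrec lab :: "rt \<Rightarrow> nat set" where
  "lab (Node L cs) = L"

primrec kids :: "rt \<Rightarrow> rt multiset" where
  "kids (Node L cs) = cs"

primrec subtrees :: "rt \<Rightarrow> rt multiset" where
  "subtrees (Node L cs) = {#Node L cs#} + sum_mset (image_mset subtrees cs)"

definition labsets :: "rt \<Rightarrow> nat set multiset" where
  "labsets t = image_mset lab (subtrees t)"

primrec alllabs :: "rt \<Rightarrow> nat set" where
  "alllabs (Node L cs) = L \<union> \<Union> (set_mset (image_mset alllabs cs))"

text \<open>Colour: labelled nodes are white; an empty node is red iff all its
children are white (i.e. not red).\<close>
primrec red :: "rt \<Rightarrow> bool" where
  "red (Node L cs) = (L = {} \<and> (\<forall>b\<in>#image_mset red cs. \<not> b))"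

definition RW :: "nat \<Rightarrow> rt set" where
  "RW n = {t. (\<forall>A\<in>#labsets t. \<forall>B\<in>#labsets t - {#A#}. A \<inter> B = {})
             \<and> \<Union> (set_mset (labsets t)) = {1..n}
             \<and> (\<forall>s\<in>#subtrees t. lab s = {} \<longrightarrow> size (kids s) \<ge> 2)}"

primrec relabel :: "(nat \<Rightarrow> nat) \<Rightarrow> rt \<Rightarrow> rt" where
  "relabel f (Node L cs) = Node (f ` L) (image_mset (relabel f) cs)"

text \<open>Grafting T at the node containing x (after relabelling):
cases (W), (R2) at the node z containing x, and (R3) handled at the parent of z.\<close>
primrec graft :: "nat \<Rightarrow> rt \<Rightarrow> rt \<Rightarrow> rt" where
  "graft x T (Node L cs) =
     (if x \<in> L then
        (if red T then Node (L - {x}) (cs + {#T#})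
         else Node ((L - {x}) \<union> lab T) (cs + kids T))
      else Node L (sum_mset (image_mset
              (\<lambda>(c, g). if c = Node {x} {#} \<and> red T then kids T else {#g#})
              (image_mset (\<lambda>c. (c, graft x T c)) cs))))"

definition comp :: "nat \<Rightarrow> nat \<Rightarrow> rt \<Rightarrow> nat \<Rightarrow> rt \<Rightarrow> rt" where
  "comp m n T1 x T2 =
     (let T1' = relabel (\<lambda>y. if y > x then y + n - 1 else y) T1;
          T2' = relabel (\<lambda>y. y + x - 1) T2
      in if red T2' \<and> T1' = Node {x} {#} then T2'
         else graft x T2' T1')"

definition A_mu :: rt where "A_mu = Node {1,2} {#}"
definition A_prec :: rt where "A_prec = Node {1} {#Node {2} {#}#}"
definition A_succ :: rt where "A_succ = Node {2} {#Node {1} {#}#}"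
definition A_odot :: rt where "A_odot = Node {} {#Node {1} {#}, Node {2} {#}#}"

inductive gen_op :: "(nat \<times> rt) set \<Rightarrow> nat \<Rightarrow> rt \<Rightarrow> bool" for G where
  unit: "gen_op G 1 (Node {1} {#})"
| gens: "(n, t) \<in> G \<Longrightarrow> gen_op G n t"
| comp: "gen_op G m s \<Longrightarrow> gen_op G n t \<Longrightarrow> 1 \<le> x \<Longrightarrow> x \<le> m
         \<Longrightarrow> gen_op G (m + n - 1) (comp m n s x t)"

definition rec_labelled :: "rt \<Rightarrow> bool" where
  "rec_labelled t = (\<forall>s\<in>#subtrees t. \<exists>a b. alllabs s = {a..b})"

end

theory Submission
  imports Defs
begin


lemma mem_subtrees_Node:
  "u \<in># subtrees (Node L cs) \<longleftrightarrow> u = Node L cs \<or> (\<exists>c\<in>#cs. u \<in># subtrees c)"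
  by auto

lemma self_subtrees[simp]: "t \<in># subtrees t"
  by (cases t) auto

lemma subtrees_trans: "u \<in># subtrees v \<Longrightarrow> v \<in># subtrees t \<Longrightarrow> u \<in># subtrees t"
proof (induction t)
  case (Node L cs)
  then show ?case by (auto simp: mem_subtrees_Node)
qed

lemma kid_subtrees: "c \<in># cs \<Longrightarrow> u \<in># subtrees c \<Longrightarrow> u \<in># subtrees (Node L cs)"
  by auto

lemma alllabs_subtrees: "alllabs t = (\<Union>u\<in>set_mset (subtrees t). lab u)"
proof (induction t)
  case (Node L cs)
  then show ?case by (auto simp: mem_subtrees_Node)
qed

definition occ :: "nat \<Rightarrow> rt \<Rightarrow> nat" where
  "occ y t = size (filter_mset (\<lambda>u. y \<in> lab u) (subtrees t))"

lemma filter_sum_image: "filter_mset P (sum_mset (image_mset f M)) = sum_mset (image_mset (\<lambda>x. filter_mset P (f x)) M)"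
  by (induction M) auto

lemma occ_Node: "occ y (Node L cs) = (if y \<in> L then 1 else 0) + sum_mset (image_mset (occ y) cs)"
  unfolding occ_def by (simp add: filter_sum_image image_mset.compositionality o_def)

lemma occ_pos: "occ y t > 0 \<longleftrightarrow> y \<in> alllabs t"
proof -
  have "0 < size M \<longleftrightarrow> (\<exists>x. x \<in># M)" for M :: "rt multiset"
    by (cases M) auto
  then show ?thesis unfolding occ_def alllabs_subtrees by auto
qed

lemma size_filter_ge2:
  assumes "size (filter_mset P M) \<ge> 2"
  shows "\<exists>u1 u2. u1 \<in># M \<and> u2 \<in># M - {#u1#} \<and> P u1 \<and> P u2"
proof -
  obtain u1 where u1: "u1 \<in># filter_mset P M"
    using assms by (cases "filter_mset P M") auto
  have "size (filter_mset P (M - {#u1#})) \<ge> 1"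
    using assms u1 by (simp add: size_Diff_submset)
  then obtain u2 where "u2 \<in># filter_mset P (M - {#u1#})"
    by (cases "filter_mset P (M - {#u1#})") auto
  then have "u2 \<in># M - {#u1#} \<and> P u2" by (simp del: filter_diff_mset)
  then show ?thesis using u1 by auto
qed

lemma disj_iff:
  "(\<forall>A\<in>#labsets t. \<forall>B\<in>#labsets t - {#A#}. A \<inter> B = {}) \<longleftrightarrow> (\<forall>y. occ y t \<le> 1)"
proof
  assume H: "\<forall>A\<in>#labsets t. \<forall>B\<in>#labsets t - {#A#}. A \<inter> B = {}"
  show "\<forall>y. occ y t \<le> 1"
  proof (rule ccontr)
    assume "\<not> (\<forall>y. occ y t \<le> 1)"
    then obtain y where "\<not> occ y t \<le> 1" by blast
    then have "occ y t \<ge> 2" by simp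
    then obtain u1 u2 where u: "u1 \<in># subtrees t" "u2 \<in># subtrees t - {#u1#}" "y \<in> lab u1" "y \<in> lab u2"
      unfolding occ_def using size_filter_ge2 by blast
    have e: "image_mset lab (subtrees t - {#u1#}) = image_mset lab (subtrees t) - {#lab u1#}"
      using u by (simp add: image_mset_Diff)
    have "lab u2 \<in># labsets t - {#lab u1#}"
      using u unfolding labsets_def e[symmetric] by simp
    moreover have "lab u1 \<in># labsets t" using u unfolding labsets_def by simp
    ultimately show False using H u by blast
  qed
next
  assume H: "\<forall>y. occ y t \<le> 1"
  show "\<forall>A\<in>#labsets t. \<forall>B\<in>#labsets t - {#A#}. A \<inter> B = {}"
  proof (intro ballI)
    fix A B assume A: "A \<in># labsets t" and B: "B \<in># labsets t - {#A#}"
    obtain u1 where u1: "u1 \<in># subtrees t" "A = lab u1" using A unfolding labsets_def by auto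
    have "B \<in># image_mset lab (subtrees t - {#u1#})"
      using B u1 unfolding labsets_def by (simp add: image_mset_Diff)
    then obtain u2 where u2: "u2 \<in># subtrees t - {#u1#}" "B = lab u2" by auto
    have sub: "{#u1, u2#} \<subseteq># subtrees t"
      using u1 u2 by (metis add_mset_add_single insert_DiffM mset_subset_eq_add_mset_cancel single_subset_iff)
    show "A \<inter> B = {}"
    proof (rule ccontr)
      assume "A \<inter> B \<noteq> {}"
      then obtain y where y: "y \<in> lab u1" "y \<in> lab u2" using u1 u2 by auto
      have "filter_mset (\<lambda>u. y \<in> lab u) {#u1, u2#} \<subseteq># filter_mset (\<lambda>u. y \<in> lab u) (subtrees t)"
        using sub by (rule multiset_filter_mono)
      then have "size (filter_mset (\<lambda>u. y \<in> lab u) {#u1, u2#}) \<le> occ y t"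
        unfolding occ_def by (rule size_mset_mono)
      then have "occ y t \<ge> 2" using y by simp
      moreover have "occ y t \<le> 1" using H by blast
      ultimately show False by simp
    qed
  qed
qed

definition single :: "rt \<Rightarrow> bool" where
  "single t = (\<forall>u\<in>#subtrees t. card (lab u) = 1)"

definition Good :: "nat \<Rightarrow> rt \<Rightarrow> bool" where
  "Good n t = (single t \<and> (\<forall>y. occ y t \<le> 1) \<and> alllabs t = {1..n} \<and> rec_labelled t)"

lemma RHS_iff:
  "(t \<in> RW n \<and> rec_labelled t \<and> (\<forall>s\<in>#subtrees t. card (lab s) = 1)) \<longleftrightarrow> Good n t"
proof -
  have U: "\<Union> (set_mset (labsets t)) = alllabs t"
    unfolding labsets_def alllabs_subtrees by auto
  show ?thesis unfolding RW_def Good_def single_def disj_iff[symmetric]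
    by (auto simp: U)
qed




lemma relabel_comp: "relabel f (relabel g t) = relabel (f \<circ> g) t"
  by (induction t) (auto simp: image_mset.compositionality o_def image_image intro: image_mset_cong)

lemma relabel_id_on: "(\<forall>y\<in>alllabs t. f y = y) \<Longrightarrow> relabel f t = t"
proof (induction t)
  case (Node L cs)
  have "image_mset (relabel f) cs = image_mset id cs"
    by (rule image_mset_cong) (use Node in auto)
  then show ?case using Node.prems by auto
qed

lemma lab_relabel[simp]: "lab (relabel f t) = f ` lab t" by (cases t) auto
lemma kids_relabel[simp]: "kids (relabel f t) = image_mset (relabel f) (kids t)" by (cases t) auto

lemma image_sum_mset: "image_mset f (sum_mset M) = sum_mset (image_mset (image_mset f) M)"
  by (induction M) auto

lemma subtrees_relabel: "subtrees (relabel f t) = image_mset (relabel f) (subtrees t)"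
  by (induction t) (auto simp: image_mset.compositionality o_def image_sum_mset intro!: arg_cong[where f=sum_mset] image_mset_cong)

lemma alllabs_relabel: "alllabs (relabel f t) = f ` alllabs t"
  by (induction t) auto

lemma occ_relabel:
  assumes "inj_on f (alllabs t)" "y \<in> alllabs t"
  shows "occ (f y) (relabel f t) = occ y t"
proof -
  have "filter_mset (\<lambda>u. f y \<in> lab u) (image_mset (relabel f) (subtrees t))
        = image_mset (relabel f) (filter_mset (\<lambda>u. y \<in> lab u) (subtrees t))"
  proof -
    have "filter_mset (\<lambda>u. f y \<in> lab u) (image_mset (relabel f) (subtrees t))
        = image_mset (relabel f) (filter_mset (\<lambda>u. f y \<in> f ` lab u) (subtrees t))"
      by (simp add: filter_mset_image_mset o_def)
    also have "filter_mset (\<lambda>u. f y \<in> f ` lab u) (subtrees t) = filter_mset (\<lambda>u. y \<in> lab u) (subtrees t)"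
    proof (rule filter_mset_cong[OF refl])
      fix u assume "u \<in># subtrees t"
      then have "lab u \<subseteq> alllabs t" unfolding alllabs_subtrees by auto
      then show "(f y \<in> f ` lab u) = (y \<in> lab u)"
        using assms by (meson inj_on_image_mem_iff)
    qed
    finally show ?thesis .
  qed
  then show ?thesis unfolding occ_def subtrees_relabel by simp
qed

lemma occ_relabel_out: "z \<notin> f ` alllabs t \<Longrightarrow> occ z (relabel f t) = 0"
  using occ_pos[of z "relabel f t"] by (simp add: alllabs_relabel)

lemma single_relabel: "single t \<Longrightarrow> single (relabel f t)"
  unfolding single_def subtrees_relabel by (auto simp: card_Suc_eq)

lemma Good_relabel:
  assumes "inj_on q (alllabs t)" "single t" "\<forall>y. occ y t \<le> 1" "q ` alllabs t = {1..k}"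
    "\<forall>u\<in>#subtrees t. \<exists>c d. q ` alllabs u = {c..d}"
  shows "Good k (relabel q t)"
  unfolding Good_def
proof (intro conjI)
  show "single (relabel q t)" using assms single_relabel by blast
  show "\<forall>y. occ y (relabel q t) \<le> 1"
  proof
    fix z show "occ z (relabel q t) \<le> 1"
    proof (cases "z \<in> q ` alllabs t")
      case True
      then obtain y where "y \<in> alllabs t" "z = q y" by auto
      then show ?thesis using occ_relabel[OF assms(1)] assms(3) by simp
    next
      case False then show ?thesis using occ_relabel_out by simp
    qed
  qed
  show "alllabs (relabel q t) = {1..k}" using assms by (simp add: alllabs_relabel)
  show "rec_labelled (relabel q t)" unfolding rec_labelled_def subtrees_relabel
    using assms(5) by (auto simp: alllabs_relabel)
qed

lemma notred: "lab T \<noteq> {} \<Longrightarrow> \<not> red T" by (cases T) auto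

lemma graft_simp:
  assumes "lab T \<noteq> {}"
  shows "graft x T (Node L cs) = (if x \<in> L then Node ((L - {x}) \<union> lab T) (cs + kids T)
                                  else Node L (image_mset (graft x T) cs))"
proof -
  have "sum_mset (image_mset (\<lambda>(c, g). if c = Node {x} {#} \<and> red T then kids T else {#g#})
              (image_mset (\<lambda>c. (c, graft x T c)) cs)) = image_mset (graft x T) cs"
    using notred[OF assms] by (simp add: image_mset.compositionality o_def)
  then show ?thesis by (simp add: notred[OF assms])
qed

lemma graft_in: "lab T \<noteq> {} \<Longrightarrow> x \<in> L \<Longrightarrow> graft x T (Node L cs) = Node ((L - {x}) \<union> lab T) (cs + kids T)"
  by (subst graft_simp) auto
lemma graft_out: "lab T \<noteq> {} \<Longrightarrow> x \<notin> L \<Longrightarrow> graft x T (Node L cs) = Node L (image_mset (graft x T) cs)"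
  by (subst graft_simp) auto

declare graft.simps[simp del]

lemma graft_notin: "lab T \<noteq> {} \<Longrightarrow> x \<notin> alllabs s \<Longrightarrow> graft x T s = s"
proof (induction s)
  case (Node L cs)
  have "image_mset (graft x T) cs = image_mset id cs"
    by (rule image_mset_cong) (use Node in auto)
  then show ?case using Node.prems by (simp add: graft_simp del: graft.simps)
qed

lemma lab_graft: "lab T \<noteq> {} \<Longrightarrow>
   lab (graft x T v) = (if x \<in> lab v then (lab v - {x}) \<union> lab T else lab v)"
  by (cases v) (simp add: graft_simp del: graft.simps)

definition Px :: "nat \<Rightarrow> rt \<Rightarrow> bool" where
  "Px x s = (occ x s \<le> 1 \<and> (\<forall>u\<in>#subtrees s. x \<in> lab u \<longrightarrow> lab u = {x}))"

lemma Px_kid: "Px x (Node L cs) \<Longrightarrow> c \<in># cs \<Longrightarrow> Px x c"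
  unfolding Px_def occ_Node
  by (auto dest!: multi_member_split)

lemma occ_graft:
  assumes "lab T \<noteq> {}" "Px x s"
  shows "occ y (graft x T s) = (if y = x then 0 else occ y s) + occ x s * occ y T"
  using assms(2)
proof (induction s)
  case (Node L cs)
  show ?case
  proof (cases "x \<in> L")
    case True
    then have L: "L = {x}" using Node.prems unfolding Px_def by auto
    have "sum_mset (image_mset (occ x) cs) = 0" using Node.prems True unfolding Px_def occ_Node by auto
    then have z: "\<forall>c\<in>#cs. occ x c = 0" by auto
    have "occ y T = (if y \<in> lab T then 1 else 0) + sum_mset (image_mset (occ y) (kids T))"
      by (cases T) (simp add: occ_Node)
    then show ?thesis using True L z
      by (auto simp: graft_simp assms(1) occ_Node del: graft.simps)
  next
    case False
    have IH: "\<And>c. c \<in># cs \<Longrightarrow> occ y (graft x T c) = (if y = x then 0 else occ y c) + occ x c * occ y T"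
      using Node Px_kid by blast
    have "sum_mset (image_mset (occ y) (image_mset (graft x T) cs))
        = sum_mset (image_mset (\<lambda>c. (if y = x then 0 else occ y c) + occ x c * occ y T) cs)"
      by (simp add: image_mset.compositionality o_def IH cong: image_mset_cong)
    also have "\<dots> = (if y = x then 0 else sum_mset (image_mset (occ y) cs))
                      + sum_mset (image_mset (occ x) cs) * occ y T"
      by (simp add: sum_mset.distrib sum_mset_distrib_right)
    finally show ?thesis using False by (simp add: graft_simp assms(1) occ_Node del: graft.simps)
  qed
qed

lemma alllabs_mono: "u \<in># subtrees c \<Longrightarrow> alllabs u \<subseteq> alllabs c"
  unfolding alllabs_subtrees using subtrees_trans by blast

lemma occ_kid_le: "occ x (Node L cs) \<le> 1 \<Longrightarrow> c \<in># cs \<Longrightarrow> occ x c \<le> 1"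
  unfolding occ_Node by (auto dest!: multi_member_split)

lemma alllabs_T: "alllabs T = lab T \<union> (\<Union>c\<in>set_mset (kids T). alllabs c)"
  by (cases T) auto

lemma subtrees_graft:
  assumes "lab T \<noteq> {}" "occ x s \<le> 1" "u \<in># subtrees (graft x T s)"
  shows "u \<in># subtrees T \<or> (\<exists>v\<in>#subtrees s. u = graft x T v)"
  using assms(2,3)
proof (induction s arbitrary: u)
  case (Node L cs)
  show ?case
  proof (cases "x \<in> L")
    case True
    then have z: "\<forall>c\<in>#cs. x \<notin> alllabs c" using Node.prems(1) unfolding occ_Node
      by (auto dest!: multi_member_split simp: occ_pos[symmetric])
    have "u = graft x T (Node L cs) \<or> (\<exists>c\<in>#cs. u \<in># subtrees c) \<or> (\<exists>c\<in>#kids T. u \<in># subtrees c)"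
      using Node.prems(2) True by (auto simp: graft_in[OF assms(1) True])
    moreover have "u \<in># subtrees T" if "c\<in>#kids T" "u \<in># subtrees c" for c
      using that by (cases T) auto
    moreover have "u = graft x T u \<and> u \<in># subtrees (Node L cs)" if "c\<in>#cs" "u \<in># subtrees c" for c
    proof -
      have "x \<notin> alllabs u" using that z alllabs_mono[OF that(2)] by auto
      then show ?thesis using graft_notin[OF assms(1)] that by auto
    qed
    ultimately show ?thesis by (metis self_subtrees)
  next
    case False
    then have "u = graft x T (Node L cs) \<or> (\<exists>c\<in>#cs. u \<in># subtrees (graft x T c))"
      using Node.prems(2) by (auto simp: graft_out[OF assms(1) False])
    then show ?thesis
    proof
      assume "\<exists>c\<in>#cs. u \<in># subtrees (graft x T c)"
      then obtain c where c: "c \<in># cs" "u \<in># subtrees (graft x T c)" by blast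
      then have "u \<in># subtrees T \<or> (\<exists>v\<in>#subtrees c. u = graft x T v)"
        using Node.IH occ_kid_le[OF Node.prems(1)] by blast
      then show ?thesis using c by auto
    qed (metis self_subtrees)
  qed
qed

lemma alllabs_graft:
  assumes "lab T \<noteq> {}" "occ x s \<le> 1"
  shows "alllabs (graft x T s) = (if x \<in> alllabs s then (alllabs s - {x}) \<union> alllabs T else alllabs s)"
  using assms(2)
proof (induction s)
  case (Node L cs)
  show ?case
  proof (cases "x \<in> L")
    case True
    then have z: "\<forall>c\<in>#cs. x \<notin> alllabs c" using Node.prems(1) unfolding occ_Node
      by (auto dest!: multi_member_split simp: occ_pos[symmetric])
    show ?thesis using True z alllabs_T[of T]
      by (auto simp: graft_in[OF assms(1) True])
  next
    case False
    have IH: "\<And>c. c \<in># cs \<Longrightarrow> alllabs (graft x T c) = (if x \<in> alllabs c then (alllabs c - {x}) \<union> alllabs T else alllabs c)"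
      using Node.IH occ_kid_le[OF Node.prems(1)] by blast
    show ?thesis using False IH
      by (auto simp: graft_out[OF assms(1) False] split: if_splits)
  qed
qed




lemma I1:
  assumes "n \<ge> 1" "c \<le> x" "x \<le> d"
  shows "((\<lambda>y::nat. if y > x then y + n - 1 else y) ` {c..d} - {x}) \<union> {x..x+n-1} = {c..d+n-1}"
proof
  show "((\<lambda>y. if y > x then y + n - 1 else y) ` {c..d} - {x}) \<union> {x..x+n-1} \<subseteq> {c..d+n-1}"
    using assms by auto
  show "{c..d+n-1} \<subseteq> ((\<lambda>y. if y > x then y + n - 1 else y) ` {c..d} - {x}) \<union> {x..x+n-1}"
  proof
    fix z assume z: "z \<in> {c..d+n-1}"
    show "z \<in> ((\<lambda>y. if y > x then y + n - 1 else y) ` {c..d} - {x}) \<union> {x..x+n-1}"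
    proof (cases "z < x")
      case True
      then have "z = (\<lambda>y. if y > x then y + n - 1 else y) z" by simp
      then show ?thesis using z True assms by (intro UnI1) (auto intro!: image_eqI[where x=z])
    next
      case False
      show ?thesis
      proof (cases "z \<le> x + n - 1")
        case True then show ?thesis using False by auto
      next
        case F2: False
        have gx: "z + 1 - n > x" using F2 assms by auto
        have "z = (\<lambda>y. if y > x then y + n - 1 else y) (z + 1 - n)" using F2 gx assms by auto
        moreover have "z + 1 - n \<in> {c..d}" using F2 z assms by auto
        ultimately have "z \<in> (\<lambda>y. if y > x then y + n - 1 else y) ` {c..d}" by (rule image_eqI)
        moreover have "z \<noteq> x" using F2 assms by auto
        ultimately show ?thesis by blast
      qed
    qed
  qed
qed

lemma I2:
  assumes "x \<notin> {c..d}" "n \<ge> 1"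
  shows "\<exists>a b. ((\<lambda>y::nat. if y > x then y + n - 1 else y) ` {c..d}) = {a..b}"
proof (cases "c \<le> d")
  case False then show ?thesis by (intro exI[of _ 1] exI[of _ 0]) auto
next
  case True
  then have "d < x \<or> c > x" using assms by auto
  then show ?thesis
  proof
    assume "d < x"
    then have "((\<lambda>y::nat. if y > x then y + n - 1 else y) ` {c..d}) = {c..d}"
      by (auto intro!: image_eqI)
    then show ?thesis by blast
  next
    assume cx: "c > x"
    have "((\<lambda>y::nat. if y > x then y + n - 1 else y) ` {c..d}) = (\<lambda>y. y + n - 1) ` {c..d}"
      using cx by (auto intro!: image_eqI)
    also have "\<dots> = {c + n - 1..d + n - 1}"
    proof -
      have "(\<lambda>y. y + n - 1) ` {c..d} = (\<lambda>y. y + (n - 1)) ` {c..d}" using assms by auto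
      also have "\<dots> = {c + (n - 1)..d + (n - 1)}" by simp
      finally show ?thesis using assms by simp
    qed
    finally show ?thesis by blast
  qed
qed

lemma shift_interval: "(\<lambda>y::nat. y + k) ` {c..d} = {c+k..d+k}" by simp

lemma occ_relabel_le:
  assumes "\<forall>y. occ y t \<le> 1" "inj_on f (alllabs t)"
  shows "occ z (relabel f t) \<le> 1"
proof (cases "z \<in> f ` alllabs t")
  case True
  then obtain y where "y \<in> alllabs t" "z = f y" by auto
  then show ?thesis using occ_relabel[OF assms(2)] assms(1) by simp
next
  case False then show ?thesis using occ_relabel_out by simp
qed

lemma occ_sub: "u \<in># subtrees t \<Longrightarrow> occ y u \<le> occ y t"
proof (induction t)
  case (Node L cs)
  show ?case
  proof (cases "u = Node L cs")
    case False
    then obtain c where c: "c \<in># cs" "u \<in># subtrees c" using Node.prems by auto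
    then have "occ y u \<le> occ y c" using Node.IH by blast
    also have "occ y c \<le> sum_mset (image_mset (occ y) cs)"
      using c(1) by (auto dest!: multi_member_split)
    finally show ?thesis by (simp add: occ_Node)
  qed simp
qed

lemma Good_lab: "Good n t \<Longrightarrow> lab t \<noteq> {}"
  unfolding Good_def single_def by (metis card.empty self_subtrees zero_neq_one)

lemma Good_n: "Good n t \<Longrightarrow> n \<ge> 1"
proof -
  assume G: "Good n t"
  then have "lab t \<subseteq> {1..n}" unfolding Good_def by (cases t) auto
  then show ?thesis using Good_lab[OF G] by auto
qed

lemma comp_eq:
  "lab t \<noteq> {} \<Longrightarrow> comp m n s x t =
     graft x (relabel (\<lambda>y. y + x - 1) t) (relabel (\<lambda>y. if y > x then y + n - 1 else y) s)"
  unfolding comp_def Let_def using notred[of "relabel (\<lambda>y. y + x - 1) t"] by auto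

lemma sound:
  assumes Gs: "Good m s" and Gt: "Good n t" and x: "1 \<le> x" "x \<le> m"
  shows "Good (m + n - 1) (comp m n s x t)"
proof -
  define f where "f = (\<lambda>y::nat. if y > x then y + n - 1 else y)"
  define h where "h = (\<lambda>y::nat. y + x - 1)"
  define S' where "S' = relabel f s"
  define T' where "T' = relabel h t"
  have n1: "n \<ge> 1" using Good_n[OF Gt] .
  have R: "comp m n s x t = graft x T' S'"
    unfolding S'_def T'_def f_def h_def using comp_eq[OF Good_lab[OF Gt]] by simp
  have labT: "lab T' \<noteq> {}" unfolding T'_def using Good_lab[OF Gt] by simp
  have injf: "inj f" unfolding f_def inj_def using n1 by auto
  have injh: "inj h" unfolding h_def inj_def using x by auto
  have fx: "f x = x" unfolding f_def by simp
  have hint: "h ` {c..d} = {c + x - 1..d + x - 1}" for c d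
  proof -
    have "h ` {c..d} = (\<lambda>y. y + (x - 1)) ` {c..d}" unfolding h_def using x by auto
    also have "\<dots> = {c + (x - 1)..d + (x - 1)}" by simp
    finally show ?thesis using x by simp
  qed
  have As: "alllabs s = {1..m}" and At: "alllabs t = {1..n}" using Gs Gt unfolding Good_def by auto
  have AS': "alllabs S' = f ` {1..m}" unfolding S'_def alllabs_relabel As ..
  have AT': "alllabs T' = {x..x+n-1}" unfolding T'_def alllabs_relabel At hint using x by (simp add: add.commute)
  have occs: "\<forall>y. occ y s \<le> 1" and occt: "\<forall>y. occ y t \<le> 1" using Gs Gt unfolding Good_def by auto
  have occS': "occ y S' \<le> 1" for y unfolding S'_def using occ_relabel_le[OF occs] injf by (simp add: inj_on_def inj_def)
  have occT': "occ y T' \<le> 1" for y unfolding T'_def using occ_relabel_le[OF occt] injh by (simp add: inj_on_def inj_def)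
  have xs: "x \<in> alllabs s" using As x by auto
  have occx: "occ x S' = 1"
  proof -
    have "occ (f x) S' = occ x s" unfolding S'_def using occ_relabel injf xs by (metis inj_on_subset subset_UNIV)
    moreover have "occ x s \<ge> 1" using occ_pos[of x s] xs by simp
    ultimately show ?thesis using occs fx by (metis le_antisym)
  qed
  have sings: "single s" and singt: "single t" using Gs Gt unfolding Good_def by auto
  have singS': "single S'" and singT': "single T'" unfolding S'_def T'_def using sings singt single_relabel by auto
  have PxS': "Px x S'"
    unfolding Px_def
  proof (intro conjI ballI impI)
    show "occ x S' \<le> 1" using occx by simp
    fix u assume u: "u \<in># subtrees S'" "x \<in> lab u"
    then obtain v where v: "v \<in># subtrees s" "u = relabel f v" unfolding S'_def subtrees_relabel by auto
    then obtain w where w: "lab v = {w}" using sings unfolding single_def by (metis card_1_singletonE)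
    then have "x = f w" using u v by auto
    then have "w = x" using injf fx by (metis injD)
    then show "lab u = {x}" using v w fx by simp
  qed
  show ?thesis
    unfolding Good_def R
  proof (intro conjI)
    show "\<forall>y. occ y (graft x T' S') \<le> 1"
    proof
      fix y
      have e: "occ y (graft x T' S') = (if y = x then 0 else occ y S') + occ y T'"
        using occ_graft[OF labT PxS'] occx by simp
      show "occ y (graft x T' S') \<le> 1"
      proof (cases "y = x \<or> occ y S' = 0")
        case True then show ?thesis using e occT' occS' by auto
      next
        case False
        then have "y \<in> f ` {1..m}" "y \<noteq> x" using occ_pos[of y S'] AS' by auto
        then have "y \<notin> alllabs T'" unfolding AT' f_def by auto
        then have "occ y T' = 0" using occ_pos[of y T'] by simp
        then show ?thesis using e occS' by simp
      qed
    qed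
    show "alllabs (graft x T' S') = {1..m + n - 1}"
      using alllabs_graft[OF labT] occS' occx AS' AT' I1[OF n1 x] unfolding f_def
      by (metis (no_types, lifting) occ_pos zero_less_one)
    show "single (graft x T' S')"
      unfolding single_def
    proof
      fix u assume "u \<in># subtrees (graft x T' S')"
      then have "u \<in># subtrees T' \<or> (\<exists>v\<in>#subtrees S'. u = graft x T' v)"
        using subtrees_graft[OF labT] occS' by blast
      then show "card (lab u) = 1"
      proof
        assume "\<exists>v\<in>#subtrees S'. u = graft x T' v"
        then obtain v where v: "v \<in># subtrees S'" "u = graft x T' v" by blast
        have cT: "card (lab T') = 1" using singT' unfolding single_def by simp
        show ?thesis
        proof (cases "x \<in> lab v")
          case True
          then have "lab v = {x}" using PxS' v unfolding Px_def by blast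
          then show ?thesis using v lab_graft[OF labT] cT True by simp
        next
          case False
          then show ?thesis using v lab_graft[OF labT] singS' unfolding single_def by simp
        qed
      qed (use singT' in \<open>auto simp: single_def\<close>)
    qed
    show "rec_labelled (graft x T' S')"
      unfolding rec_labelled_def
    proof
      fix u assume "u \<in># subtrees (graft x T' S')"
      then have "u \<in># subtrees T' \<or> (\<exists>v\<in>#subtrees S'. u = graft x T' v)"
        using subtrees_graft[OF labT] occS' by blast
      then show "\<exists>a b. alllabs u = {a..b}"
      proof
        assume "u \<in># subtrees T'"
        then obtain w where w: "w \<in># subtrees t" "u = relabel h w" unfolding T'_def subtrees_relabel by auto
        then obtain c d where "alllabs w = {c..d}" using Gt unfolding Good_def rec_labelled_def by blast
        then show ?thesis using w hint by (auto simp: alllabs_relabel)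
      next
        assume "\<exists>v\<in>#subtrees S'. u = graft x T' v"
        then obtain v where v: "v \<in># subtrees S'" "u = graft x T' v" by blast
        then obtain w where w: "w \<in># subtrees s" "v = relabel f w" unfolding S'_def subtrees_relabel by auto
        then obtain c d where cd: "alllabs w = {c..d}" using Gs unfolding Good_def rec_labelled_def by blast
        have Av: "alllabs v = f ` {c..d}" using w cd by (simp add: alllabs_relabel)
        have ov: "occ x v \<le> 1" using occ_sub[OF v(1)] occS' by (meson order_trans)
        show ?thesis
        proof (cases "x \<in> {c..d}")
          case True
          then have "x \<in> alllabs v" using Av fx by (metis imageI)
          then have "alllabs u = (f ` {c..d} - {x}) \<union> {x..x+n-1}"
            using alllabs_graft[OF labT ov] v Av AT' by simp
          then show ?thesis using I1[OF n1, of c x d] True unfolding f_def by auto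
        next
          case False
          then have "x \<notin> alllabs v" unfolding Av using injf fx
            by (metis imageE injD)
          then have "alllabs u = f ` {c..d}" using alllabs_graft[OF labT ov] v Av by simp
          then show ?thesis using I2[OF False n1] unfolding f_def by auto
        qed
      qed
    qed
  qed
qed




definition q :: "nat \<Rightarrow> nat \<Rightarrow> nat \<Rightarrow> nat" where
  "q a b y = (if y > b then y - (b - a) else y)"

lemma Q1: "a \<le> b \<Longrightarrow> inj_on (q a b) {y. y \<le> a \<or> y > b}"
  unfolding q_def inj_on_def by auto

lemma Q2:
  assumes "a \<le> b" "{c..d} \<inter> {a+1..b} = {}"
  shows "\<exists>c' d'. q a b ` {c..d} = {c'..d'}"
proof (cases "c \<le> d")
  case False then show ?thesis by (intro exI[of _ 1] exI[of _ 0]) auto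
next
  case True
  show ?thesis
  proof (cases "a = b")
    case True
    then have "q a b ` {c..d} = {c..d}" unfolding q_def by (auto intro!: image_eqI)
    then show ?thesis by blast
  next
  case False
  then have "d \<le> a \<or> c > b" using assms True by auto
  then show ?thesis
  proof
    assume "d \<le> a"
    then have "q a b ` {c..d} = {c..d}" using assms unfolding q_def by (auto intro!: image_eqI)
    then show ?thesis by blast
  next
    assume cb: "c > b"
    have "q a b ` {c..d} = (\<lambda>y. y - (b - a)) ` {c..d}" using cb unfolding q_def by (auto intro!: image_eqI)
    also have "\<dots> = {c - (b - a)..d - (b - a)}"
    proof
      show "(\<lambda>y. y - (b - a)) ` {c..d} \<subseteq> {c - (b - a)..d - (b - a)}" by auto
      show "{c - (b - a)..d - (b - a)} \<subseteq> (\<lambda>y. y - (b - a)) ` {c..d}"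
      proof
        fix z assume z: "z \<in> {c - (b - a)..d - (b - a)}"
        have "z = (z + (b - a)) - (b - a)" by simp
        moreover have "z + (b - a) \<in> {c..d}" using z cb assms by auto
        ultimately show "z \<in> (\<lambda>y. y - (b - a)) ` {c..d}" by (rule image_eqI)
      qed
    qed
    finally show ?thesis by blast
  qed
  qed
qed

lemma Q3:
  assumes "a \<le> b" "b \<le> n"
  shows "q a b ` ({1..n} - {a+1..b}) = {1..n - (b - a)}"
proof
  show "q a b ` ({1..n} - {a+1..b}) \<subseteq> {1..n - (b - a)}" using assms unfolding q_def by auto
  show "{1..n - (b - a)} \<subseteq> q a b ` ({1..n} - {a+1..b})"
  proof
    fix z assume z: "z \<in> {1..n - (b - a)}"
    show "z \<in> q a b ` ({1..n} - {a+1..b})"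
    proof (cases "z \<le> a")
      case True
      then have "z = q a b z" unfolding q_def using assms by auto
      moreover have "z \<in> {1..n} - {a+1..b}" using z True assms by auto
      ultimately show ?thesis by (rule image_eqI)
    next
      case False
      then have "z = q a b (z + (b - a))" unfolding q_def using assms by auto
      moreover have "z + (b - a) \<in> {1..n} - {a+1..b}" using z False assms by auto
      ultimately show ?thesis by (rule image_eqI)
    qed
  qed
qed

lemma GoodQ:
  assumes "single t0" "\<forall>y. occ y t0 \<le> 1" "alllabs t0 = {1..n} - {a+1..b}" "a \<le> b" "b \<le> n"
    "\<forall>u\<in>#subtrees t0. u \<noteq> t0 \<longrightarrow> (\<exists>c d. alllabs u = {c..d})"
  shows "Good (n - (b - a)) (relabel (q a b) t0)"
proof (rule Good_relabel)
  show "inj_on (q a b) (alllabs t0)" by (rule inj_on_subset[OF Q1[OF assms(4)]]) (use assms(3) in auto)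
  show "q a b ` alllabs t0 = {1..n - (b - a)}" using Q3[OF assms(4,5)] assms(3) by simp
  show "\<forall>u\<in>#subtrees t0. \<exists>c d. q a b ` alllabs u = {c..d}"
  proof
    fix u assume u: "u \<in># subtrees t0"
    show "\<exists>c d. q a b ` alllabs u = {c..d}"
    proof (cases "u = t0")
      case True then show ?thesis using Q3[OF assms(4,5)] assms(3) by auto
    next
      case False
      then obtain c d where cd: "alllabs u = {c..d}" using assms(6) u by blast
      have "alllabs u \<subseteq> alllabs t0" using alllabs_mono[OF u] .
      then have H: "\<forall>y. c \<le> y \<and> y \<le> d \<longrightarrow> \<not> (a+1 \<le> y \<and> y \<le> b)" using cd assms(3) by auto
      have "{c..d} \<inter> {a+1..b} = {}"
      proof (rule ccontr)
        assume "{c..d} \<inter> {a+1..b} \<noteq> {}"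
        then obtain y where "y \<in> {c..d}" "y \<in> {a+1..b}" by blast
        then show False using H by auto
      qed
      then show ?thesis using Q2[OF assms(4)] cd by simp
    qed
  qed
qed (use assms in auto)




lemma split_props:
  assumes G: "Good n (Node {r} (add_mset c rest))"
  shows "\<forall>d\<in>#rest. \<forall>u\<in>#subtrees d. card (lab u) = 1 \<and> (\<exists>a b. alllabs u = {a..b})"
    and "\<forall>u\<in>#subtrees c. card (lab u) = 1 \<and> (\<exists>a b. alllabs u = {a..b})"
    and "\<And>y. (if y = r then 1 else 0) + occ y c + sum_mset (image_mset (occ y) rest) \<le> 1"
    and "{1..n} = {r} \<union> alllabs c \<union> (\<Union>d\<in>set_mset rest. alllabs d)"
proof -
  have S: "\<forall>u\<in>#subtrees (Node {r} (add_mset c rest)). card (lab u) = 1 \<and> (\<exists>a b. alllabs u = {a..b})"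
    using G unfolding Good_def single_def rec_labelled_def by blast
  show "\<forall>d\<in>#rest. \<forall>u\<in>#subtrees d. card (lab u) = 1 \<and> (\<exists>a b. alllabs u = {a..b})"
  proof (intro ballI)
    fix d u assume "d \<in># rest" "u \<in># subtrees d"
    then have "u \<in># subtrees (Node {r} (add_mset c rest))" by (intro kid_subtrees[of d]) auto
    then show "card (lab u) = 1 \<and> (\<exists>a b. alllabs u = {a..b})" using S by blast
  qed
  show "\<forall>u\<in>#subtrees c. card (lab u) = 1 \<and> (\<exists>a b. alllabs u = {a..b})"
    using S kid_subtrees[of c "add_mset c rest"] by simp
  fix y
  have "occ y (Node {r} (add_mset c rest)) \<le> 1" using G unfolding Good_def by blast
  then show "(if y = r then 1 else 0) + occ y c + sum_mset (image_mset (occ y) rest) \<le> 1"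
    unfolding occ_Node by simp
next
  show "{1..n} = {r} \<union> alllabs c \<union> (\<Union>d\<in>set_mset rest. alllabs d)"
    using G unfolding Good_def by auto
qed

lemma t0_props:
  assumes R: "\<forall>d\<in>#rest. \<forall>u\<in>#subtrees d. card (lab u) = 1 \<and> (\<exists>a b. alllabs u = {a..b})"
    and E: "\<forall>e\<in>#E. \<exists>p. e = Node {p} {#}"
    and O: "\<And>y. (if y = r0 then 1 else 0) + sum_mset (image_mset (occ y) E) + sum_mset (image_mset (occ y) rest) \<le> 1"
  shows "single (Node {r0} (E + rest))" "\<forall>y. occ y (Node {r0} (E + rest)) \<le> 1"
    "\<forall>u\<in>#subtrees (Node {r0} (E + rest)). u \<noteq> Node {r0} (E + rest) \<longrightarrow> (\<exists>c d. alllabs u = {c..d})"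
proof -
  have sub: "u = Node {r0} (E + rest) \<or> (\<exists>p. u = Node {p} {#}) \<or> (\<exists>d\<in>#rest. u \<in># subtrees d)"
    if "u \<in># subtrees (Node {r0} (E + rest))" for u
    using that E by (auto simp: mem_subtrees_Node)
  show "single (Node {r0} (E + rest))" unfolding single_def
    using sub R by fastforce
  show "\<forall>y. occ y (Node {r0} (E + rest)) \<le> 1"
  proof
    fix y show "occ y (Node {r0} (E + rest)) \<le> 1" using O[of y] unfolding occ_Node
      by (simp only: image_mset_union sum_mset.union add.assoc singleton_iff)
  qed
  show "\<forall>u\<in>#subtrees (Node {r0} (E + rest)). u \<noteq> Node {r0} (E + rest) \<longrightarrow> (\<exists>c d. alllabs u = {c..d})"
  proof (intro ballI impI)
    fix u assume "u \<in># subtrees (Node {r0} (E + rest))" "u \<noteq> Node {r0} (E + rest)"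
    then have "(\<exists>p. u = Node {p} {#}) \<or> (\<exists>d\<in>#rest. u \<in># subtrees d)" using sub by blast
    then show "\<exists>c d. alllabs u = {c..d}"
    proof
      assume "\<exists>p. u = Node {p} {#}"
      then obtain p where "u = Node {p} {#}" by blast
      then have "alllabs u = {p..p}" by simp
      then show ?thesis by blast
    qed (use R in blast)
  qed
qed

lemma occ_leaf[simp]: "occ y (Node {p} {#}) = (if y = p then 1 else 0)"
  by (simp add: occ_Node)

lemma notin_rest:
  assumes "\<And>y. (if y = r then 1 else 0) + occ y c + sum_mset (image_mset (occ y) rest) \<le> 1"
    "y \<in> alllabs c"
  shows "y \<noteq> r" "y \<notin> (\<Union>d\<in>set_mset rest. alllabs d)"
proof -
  have "occ y c \<ge> 1" using occ_pos[of y c] assms(2) by simp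
  then have "(if y = r then 1 else 0) + sum_mset (image_mset (occ y) rest) = 0" using assms(1)[of y] by linarith
  then have "y \<noteq> r" "\<forall>d\<in>#rest. occ y d = 0" by (auto split: if_splits)
  then show "y \<noteq> r" "y \<notin> (\<Union>d\<in>set_mset rest. alllabs d)"
    by (auto simp: occ_pos[symmetric])
qed

lemma caseP:
  assumes G: "Good n (Node {r} (add_mset (Node {r+1} {#}) rest))"
  shows "\<exists>C. Good (n-1) C \<and> Node {r} (add_mset (Node {r+1} {#}) rest) = comp (n-1) 2 C r A_prec
           \<and> 1 \<le> r \<and> r \<le> n - 1"
proof -
  note sp = split_props[OF G]
  define t0 where "t0 = Node {r} ({#} + rest)"
  have nr: "r + 1 \<noteq> r" "r + 1 \<notin> (\<Union>d\<in>set_mset rest. alllabs d)"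
    using notin_rest[OF sp(3), of "r+1"] by auto
  have A0: "alllabs t0 = {1..n} - {r+1..r+1}" using sp(4) nr unfolding t0_def by auto
  have rn: "r + 1 \<le> n" "1 \<le> r" using sp(4) by auto
  have tp: "single t0" "\<forall>y. occ y t0 \<le> 1"
    "\<forall>u\<in>#subtrees t0. u \<noteq> t0 \<longrightarrow> (\<exists>c d. alllabs u = {c..d})"
  proof -
    have O: "(if y = r then 1 else 0) + sum_mset (image_mset (occ y) {#}) + sum_mset (image_mset (occ y) rest) \<le> 1" for y
      using sp(3)[of y] by simp
    show "single t0" "\<forall>y. occ y t0 \<le> 1"
      "\<forall>u\<in>#subtrees t0. u \<noteq> t0 \<longrightarrow> (\<exists>c d. alllabs u = {c..d})"
      unfolding t0_def using t0_props[OF sp(1) _ O] by auto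
  qed
  have GC: "Good (n - 1) (relabel (q r (r+1)) t0)"
    using GoodQ[OF tp(1,2) A0 _ rn(1) tp(3)] by simp
  have e1: "relabel (\<lambda>y. if y > r then y + 2 - 1 else y) (relabel (q r (r+1)) t0) = t0"
    unfolding relabel_comp by (rule relabel_id_on) (auto simp: A0 q_def)
  have e2: "relabel (\<lambda>y. y + r - 1) A_prec = Node {r} {#Node {r+1} {#}#}"
    unfolding A_prec_def using rn by simp
  have "comp (n-1) 2 (relabel (q r (r+1)) t0) r A_prec = Node {r} (add_mset (Node {r+1} {#}) rest)"
  proof -
    have lp: "lab A_prec \<noteq> {}" by (simp add: A_prec_def)
    show ?thesis by (simp only: comp_eq[OF lp] e1 e2) (simp add: t0_def graft_in)
  qed
  then show ?thesis using GC rn by (intro exI[of _ "relabel (q r (r+1)) t0"]) auto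
qed

lemma caseS:
  assumes G: "Good n (Node {r} (add_mset (Node {r-1} {#}) rest))" and r2: "r \<ge> 2"
  shows "\<exists>C. Good (n-1) C \<and> Node {r} (add_mset (Node {r-1} {#}) rest) = comp (n-1) 2 C (r-1) A_succ
           \<and> 1 \<le> r - 1 \<and> r - 1 \<le> n - 1"
proof -
  note sp = split_props[OF G]
  define t0 where "t0 = Node {r-1} ({#} + rest)"
  have nr: "r - 1 \<notin> (\<Union>d\<in>set_mset rest. alllabs d)"
    using notin_rest[OF sp(3), of "r-1"] by auto
  have nr2: "r \<notin> (\<Union>d\<in>set_mset rest. alllabs d)"
  proof
    assume "r \<in> (\<Union>d\<in>set_mset rest. alllabs d)"
    then obtain d where "d \<in># rest" "r \<in> alllabs d" by auto
    then have "occ r d \<ge> 1" using occ_pos[of r d] by simp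
    moreover have "occ r d \<le> sum_mset (image_mset (occ r) rest)" using \<open>d \<in># rest\<close>
      by (auto dest!: multi_member_split)
    ultimately show False using sp(3)[of r] \<open>d \<in># rest\<close> by (simp split: if_splits)
  qed
  have A0: "alllabs t0 = {1..n} - {r-1+1..r}" using sp(4) nr nr2 r2 unfolding t0_def by auto
  have rn: "r \<le> n" using sp(4) by auto
  have tp: "single t0" "\<forall>y. occ y t0 \<le> 1"
    "\<forall>u\<in>#subtrees t0. u \<noteq> t0 \<longrightarrow> (\<exists>c d. alllabs u = {c..d})"
  proof -
    have O: "(if y = r - 1 then 1 else 0) + sum_mset (image_mset (occ y) {#}) + sum_mset (image_mset (occ y) rest) \<le> 1" for y
      using sp(3)[of y] by (simp split: if_splits)
    show "single t0" "\<forall>y. occ y t0 \<le> 1"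
      "\<forall>u\<in>#subtrees t0. u \<noteq> t0 \<longrightarrow> (\<exists>c d. alllabs u = {c..d})"
      unfolding t0_def using t0_props[OF sp(1) _ O] by auto
  qed
  have GC: "Good (n - 1) (relabel (q (r-1) r) t0)"
    using GoodQ[OF tp(1,2) A0 _ rn tp(3)] r2 by simp
  have e1: "relabel (\<lambda>y. if y > r - 1 then y + 2 - 1 else y) (relabel (q (r-1) r) t0) = t0"
    unfolding relabel_comp by (rule relabel_id_on) (use r2 in \<open>auto simp: A0 q_def\<close>)
  have e2: "relabel (\<lambda>y. y + (r - 1) - 1) A_succ = Node {r} {#Node {r-1} {#}#}"
    unfolding A_succ_def using r2 by simp
  have "comp (n-1) 2 (relabel (q (r-1) r) t0) (r-1) A_succ = Node {r} (add_mset (Node {r-1} {#}) rest)"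
  proof -
    have lp: "lab A_succ \<noteq> {}" by (simp add: A_succ_def)
    show ?thesis by (simp only: comp_eq[OF lp] e1 e2) (simp add: t0_def graft_in)
  qed
  then show ?thesis using GC rn r2 by (intro exI[of _ "relabel (q (r-1) r) t0"]) auto
qed

lemma SD:
  assumes "k \<le> c" "c \<le> d"
  shows "(\<lambda>y::nat. y - k) ` {c..d} = {c-k..d-k}"
proof
  show "(\<lambda>y. y - k) ` {c..d} \<subseteq> {c - k..d - k}" by auto
  show "{c - k..d - k} \<subseteq> (\<lambda>y. y - k) ` {c..d}"
  proof
    fix z assume z: "z \<in> {c - k..d - k}"
    have "z = (z + k) - k" by simp
    moreover have "z + k \<in> {c..d}" using z assms by auto
    ultimately show "z \<in> (\<lambda>y. y - k) ` {c..d}" by (rule image_eqI)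
  qed
qed

lemma caseSub:
  assumes G: "Good n (Node {r} (add_mset c rest))" and kc: "kids c \<noteq> {#}"
  shows "\<exists>a b T' S0. Good (n-(b-a)) T' \<and> Good (b-a+1) S0 \<and>
           Node {r} (add_mset c rest) = comp (n-(b-a)) (b-a+1) T' a S0 \<and>
           1 \<le> a \<and> a \<le> n-(b-a) \<and> a < b \<and> b - a + 1 < n \<and> b \<le> n"
proof -
  note sp = split_props[OF G]
  obtain a b where ab: "alllabs c = {a..b}" using sp(2) self_subtrees by blast
  have occc: "occ y c \<le> 1" for y using sp(3)[of y] by linarith
  obtain Lc d ds where cN: "c = Node Lc (add_mset d ds)" using kc by (cases c; metis kids.simps multiset_cases)
  obtain p where p: "Lc = {p}" using sp(2) self_subtrees cN by (metis card_1_singletonE lab.simps)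
  have "d \<in># subtrees c" using cN by auto
  then obtain p' where p': "lab d = {p'}" using sp(2) by (metis card_1_singletonE)
  have pp: "p \<noteq> p'"
  proof
    assume "p = p'"
    then have "occ p d \<ge> 1" using occ_pos[of p d] p' by (cases d) auto
    then have "occ p c \<ge> 2" using cN p by (simp add: occ_Node)
    then show False using occc[of p] by simp
  qed
  have "p' \<in> alllabs c" using cN p' by (cases d) auto
  moreover have "p \<in> alllabs c" using cN p by auto
  ultimately have alb: "a < b" using pp ab by auto
  have sub: "{a..b} \<subseteq> {1..n}" using sp(4) ab by auto
  have rn: "r \<in> {1..n}" "r \<notin> {a..b}" using sp(4) notin_rest[OF sp(3)] ab by auto
  have a1: "1 \<le> a" "b \<le> n" using sub alb by auto
  have small: "b - a + 1 < n"
  proof (cases "r < a")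
    case True then show ?thesis using a1 alb rn by auto
  next
    case False then have "r > b" using rn by auto
    then show ?thesis using rn a1 alb by auto
  qed
  define t0 where "t0 = Node {r} ({#Node {a} {#}#} + rest)"
  have disj: "y \<notin> (\<Union>d\<in>set_mset rest. alllabs d)" if "y \<in> {a..b}" for y
    using notin_rest[OF sp(3)] that ab by auto
  have A0: "alllabs t0 = {1..n} - {a+1..b}"
  proof -
    have "alllabs t0 = {r} \<union> {a} \<union> (\<Union>d\<in>set_mset rest. alllabs d)" unfolding t0_def by auto
    then show ?thesis using sp(4) ab disj rn alb by auto
  qed
  have tp: "single t0" "\<forall>y. occ y t0 \<le> 1"
    "\<forall>u\<in>#subtrees t0. u \<noteq> t0 \<longrightarrow> (\<exists>c d. alllabs u = {c..d})"
  proof -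
    have oa: "occ a c \<ge> 1" using occ_pos[of a c] ab alb by simp
    have O: "(if y = r then 1 else 0) + sum_mset (image_mset (occ y) {#Node {a} {#}#}) + sum_mset (image_mset (occ y) rest) \<le> 1" for y
    proof -
      have "(if y = r then 1 else 0) + (if y = a then 1 else 0) + sum_mset (image_mset (occ y) rest) \<le> (1::nat)"
      proof (cases "y = a")
        case True
        have "(if a = r then 1 else 0) + occ a c + sum_mset (image_mset (occ a) rest) \<le> (1::nat)" using sp(3)[of a] .
        then have "(if a = r then 1 else 0) + 1 + sum_mset (image_mset (occ a) rest) \<le> (1::nat)" using oa by linarith
        then show ?thesis using True by (simp del: sum_mset_0_iff)
      next
        case False then show ?thesis using sp(3)[of y] by simp
      qed
      then show ?thesis by simp
    qed
    show "single t0" "\<forall>y. occ y t0 \<le> 1"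
      "\<forall>u\<in>#subtrees t0. u \<noteq> t0 \<longrightarrow> (\<exists>c d. alllabs u = {c..d})"
      unfolding t0_def using t0_props[OF sp(1) _ O] by auto
  qed
  have GT: "Good (n - (b - a)) (relabel (q a b) t0)"
    using GoodQ[OF tp(1,2) A0 _ a1(2) tp(3)] alb by simp
  define S0 where "S0 = relabel (\<lambda>y. y - (a - 1)) c"
  have GS: "Good (b - a + 1) S0" unfolding S0_def
  proof (rule Good_relabel)
    show "inj_on (\<lambda>y. y - (a - 1)) (alllabs c)" unfolding ab inj_on_def using a1 by auto
    show "single c" using sp(2) unfolding single_def by blast
    show "\<forall>y. occ y c \<le> 1" using occc by blast
    show "(\<lambda>y. y - (a - 1)) ` alllabs c = {1..b - a + 1}" unfolding ab using SD[of "a-1" a b] a1 alb by simp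
    show "\<forall>u\<in>#subtrees c. \<exists>c d. (\<lambda>y. y - (a - 1)) ` alllabs u = {c..d}"
    proof
      fix u assume u: "u \<in># subtrees c"
      then obtain c' d' where cd: "alllabs u = {c'..d'}" using sp(2) by blast
      show "\<exists>c d. (\<lambda>y. y - (a - 1)) ` alllabs u = {c..d}"
      proof (cases "c' \<le> d'")
        case True
        then have "c' \<ge> a" using alllabs_mono[OF u] cd ab by auto
        then show ?thesis using SD[of "a-1" c' d'] cd True by auto
      next
        case False then show ?thesis using cd by (intro exI[of _ 1] exI[of _ 0]) auto
      qed
    qed
  qed
  have lS: "lab S0 \<noteq> {}" using Good_lab[OF GS] .
  have e1: "relabel (\<lambda>y. if y > a then y + (b - a + 1) - 1 else y) (relabel (q a b) t0) = t0"
    unfolding relabel_comp by (rule relabel_id_on) (use alb in \<open>auto simp: A0 q_def\<close>)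
  have e2: "relabel (\<lambda>y. y + a - 1) S0 = c"
    unfolding S0_def relabel_comp by (rule relabel_id_on) (use a1 in \<open>auto simp: ab\<close>)
  have lc: "lab c \<noteq> {}" using cN p by simp
  have gl: "graft a c (Node {a} {#}) = c" using graft_in[OF lc, of a "{a}" "{#}"] by (cases c) auto
  have gr: "image_mset (graft a c) rest = rest"
  proof -
    have "image_mset (graft a c) rest = image_mset id rest"
    proof (rule image_mset_cong)
      fix d assume "d \<in># rest"
      then have "a \<notin> alllabs d" using disj[of a] alb by auto
      then show "graft a c d = id d" using graft_notin[OF lc] by simp
    qed
    then show ?thesis by simp
  qed
  have ar: "a \<notin> {r}" using rn alb by auto
  have "comp (n - (b - a)) (b - a + 1) (relabel (q a b) t0) a S0 = Node {r} (add_mset c rest)"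
    by (simp only: comp_eq[OF lS] e1 e2) (simp add: t0_def graft_out[OF lc ar] gl gr)
  then show ?thesis using GT GS a1 alb small
    by (intro exI[of _ a] exI[of _ b] exI[of _ "relabel (q a b) t0"] exI[of _ S0]) auto
qed




abbreviation GG where "GG \<equiv> {(2::nat, A_prec), (2, A_succ)}"

lemma complete: "Good n t \<Longrightarrow> gen_op GG n t"
proof (induction n arbitrary: t rule: less_induct)
  case (less n t)
  obtain L cs where tN: "t = Node L cs" by (cases t)
  have sing: "single t" and occ1: "\<forall>y. occ y t \<le> 1" and At: "alllabs t = {1..n}"
    using less.prems unfolding Good_def by auto
  have "card L = 1" using sing tN unfolding single_def by (metis lab.simps self_subtrees)
  then obtain r where L: "L = {r}" by (rule card_1_singletonE)
  show ?case
  proof (cases "cs = {#}")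
    case True
    then have "{r} = {1..n}" using At tN L by simp
    then have "n = 1" "r = 1" by (metis atLeastAtMost_singleton_iff)+
    then show ?thesis using tN L True gen_op.unit by simp
  next
    case False
    then obtain c0 rest0 where "cs = add_mset c0 rest0" by (metis multiset_cases)
    have "c0 \<in># subtrees t" using tN \<open>cs = add_mset c0 rest0\<close> by simp
    then have "card (lab c0) = 1" using sing unfolding single_def by blast
    then obtain y0 where y0: "lab c0 = {y0}" by (rule card_1_singletonE)
    have "y0 \<in> alllabs c0" using y0 by (cases c0) auto
    then have "occ y0 c0 \<ge> 1" using occ_pos[of y0 c0] by simp
    moreover have "occ y0 t = (if y0 = r then 1 else 0) + (occ y0 c0 + sum_mset (image_mset (occ y0) rest0))"
      using tN L \<open>cs = add_mset c0 rest0\<close> by (simp add: occ_Node)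
    moreover have "occ y0 t \<le> 1" using occ1 by blast
    ultimately have "y0 \<noteq> r" by (auto split: if_splits)
    moreover have "y0 \<in> {1..n}" "r \<in> {1..n}" using At tN L \<open>y0 \<in> alllabs c0\<close> \<open>cs = add_mset c0 rest0\<close> by auto
    ultimately have n2: "n \<ge> 2" by auto
    define p where "p = (if r \<ge> 2 then r - 1 else r + 1)"
    have pr: "p \<noteq> r" "p \<in> {1..n}" using n2 \<open>r \<in> {1..n}\<close> unfolding p_def by auto
    then have "p \<in> alllabs t" using At by simp
    then obtain c where c: "c \<in># cs" "p \<in> alllabs c" using tN L pr by auto
    then obtain rest where csr: "cs = add_mset c rest" by (metis multi_member_split)
    have Gt: "Good n (Node {r} (add_mset c rest))" using less.prems tN L csr by simp
    show ?thesis
    proof (cases "kids c = {#}")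
      case True
      then obtain Lc where cL: "c = Node Lc {#}" by (cases c) auto
      have "c \<in># subtrees t" using tN csr by simp
      then have "card (lab c) = 1" using sing unfolding single_def by blast
      then have "card Lc = 1" using cL by simp
      moreover have "p \<in> Lc" using c cL by simp
      ultimately have Lc: "Lc = {p}" using card_1_singletonE by (metis singletonD)
      show ?thesis
      proof (cases "r \<ge> 2")
        case True
        then have "c = Node {r-1} {#}" using cL Lc p_def by simp
        then obtain C where C: "Good (n-1) C" "Node {r} (add_mset c rest) = comp (n-1) 2 C (r-1) A_succ"
          "1 \<le> r - 1" "r - 1 \<le> n - 1"
          using caseS[of n r rest] Gt True by auto
        have "gen_op GG (n - 1 + 2 - 1) (comp (n-1) 2 C (r-1) A_succ)"
          by (rule gen_op.comp) (use less.IH[of "n-1" C] C n2 gen_op.gens[of 2 A_succ GG] in auto)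
        then show ?thesis using C n2 tN L csr by simp
      next
        case False
        then have "c = Node {r+1} {#}" using cL Lc p_def by simp
        then obtain C where C: "Good (n-1) C" "Node {r} (add_mset c rest) = comp (n-1) 2 C r A_prec"
          "1 \<le> r" "r \<le> n - 1"
          using caseP[of n r rest] Gt by auto
        have "gen_op GG (n - 1 + 2 - 1) (comp (n-1) 2 C r A_prec)"
          by (rule gen_op.comp) (use less.IH[of "n-1" C] C n2 gen_op.gens[of 2 A_prec GG] in auto)
        then show ?thesis using C n2 tN L csr by simp
      qed
    next
      case False
      then obtain a b T' S0 where H: "Good (n-(b-a)) T'" "Good (b-a+1) S0"
        "Node {r} (add_mset c rest) = comp (n-(b-a)) (b-a+1) T' a S0"
        "1 \<le> a" "a \<le> n-(b-a)" "a < b" "b - a + 1 < n" "b \<le> n"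
        using caseSub[OF Gt] by blast
      have "gen_op GG (n-(b-a) + (b-a+1) - 1) (comp (n-(b-a)) (b-a+1) T' a S0)"
        by (rule gen_op.comp) (use less.IH H in auto)
      moreover have "n-(b-a) + (b-a+1) - 1 = n" using H by auto
      ultimately show ?thesis using H tN L csr by simp
    qed
  qed
qed

lemma Good_unit: "Good 1 (Node {1} {#})"
  unfolding Good_def single_def rec_labelled_def by (auto simp: occ_Node intro!: exI[of _ 1])

lemma Good_prec: "Good 2 A_prec"
proof -
  have a: "alllabs A_prec = {1..2}" unfolding A_prec_def by auto
  have s: "subtrees A_prec = {#A_prec, Node {2} {#}#}" unfolding A_prec_def by simp
  show ?thesis unfolding Good_def single_def rec_labelled_def
  proof (intro conjI allI ballI)
    fix u assume "u \<in># subtrees A_prec"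
    then have "u = A_prec \<or> u = Node {2} {#}" unfolding s by auto
    then show "card (lab u) = 1" unfolding A_prec_def by auto
    from \<open>u = A_prec \<or> u = Node {2} {#}\<close> show "\<exists>a b. alllabs u = {a..b}"
    proof
      assume "u = Node {2} {#}" then have "alllabs u = {2..2}" by simp
      then show ?thesis by blast
    next
      assume "u = A_prec" then show ?thesis using a by blast
    qed
  next
    fix y show "occ y A_prec \<le> 1" unfolding A_prec_def by (simp add: occ_Node)
  qed (rule a)
qed

lemma Good_succ: "Good 2 A_succ"
proof -
  have a: "alllabs A_succ = {1..2}" unfolding A_succ_def by auto
  have s: "subtrees A_succ = {#A_succ, Node {1} {#}#}" unfolding A_succ_def by simp
  show ?thesis unfolding Good_def single_def rec_labelled_def
  proof (intro conjI allI ballI)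
    fix u assume "u \<in># subtrees A_succ"
    then have "u = A_succ \<or> u = Node {1} {#}" unfolding s by auto
    then show "card (lab u) = 1" unfolding A_succ_def by auto
    from \<open>u = A_succ \<or> u = Node {1} {#}\<close> show "\<exists>a b. alllabs u = {a..b}"
    proof
      assume "u = Node {1} {#}" then have "alllabs u = {1..1}" by simp
      then show ?thesis by blast
    next
      assume "u = A_succ" then show ?thesis using a by blast
    qed
  next
    fix y show "occ y A_succ \<le> 1" unfolding A_succ_def by (simp add: occ_Node)
  qed (rule a)
qed

lemma sound_all: "gen_op GG n t \<Longrightarrow> Good n t"
proof (induction rule: gen_op.induct)
  case unit then show ?case by (rule Good_unit)
next
  case (gens n t) then show ?case using Good_prec Good_succ by auto
next
  case (comp m s n t x) then show ?case using sound by blast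
qed

theorem mainTheorem11:
  "gen_op {(2, A_prec), (2, A_succ)} n t \<longleftrightarrow>
     t \<in> RW n \<and> rec_labelled t \<and> (\<forall>s\<in>#subtrees t. card (lab s) = 1)"
  unfolding RHS_iff using complete sound_all by blast


end
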